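(* Let $(\mathcal{X},\rho)$ be a metric space, let $L>0$, and let $\mathcal{F}$ be the collection of all functions $f:\mathcal{X}\to\mathbb{R}$ with Lipschitz constant at most $L$. Then for every $\gamma>0$, $\mathrm{fat}_\gamma(\mathcal{F})=\mathrm{fat}^0_\gamma(\mathcal{F})$.
   Context: For a collection $\mathcal{F}$ of functions $\mathcal{X}\to\mathbb{R}$ and $\gamma>0$: a finite set $X\subset\mathcal{X}$ is $\gamma$-shattered by $\mathcal{F}$ if there exists $r:X\to\mathbb{R}$ such that for every labeling $y\in\{-1,1\}^X$ there is $f\in\mathcal{F}$ with $y(x)(f(x)-r(x))\ge\gamma$ for all $x\in X$. The set $X$ is $\gamma$-shattered at zero by $\mathcal{F}$ if this holds with $r\equiv 0$, i.e. for every $y\in\{-1,1\}^X$ there is $f\in\mathcal{F}$ with $y(x)f(x)\ge\gamma$ for all $x\in X$. $\mathrm{fat}_\gamma(\mathcal{F})$ (the $\gamma$-fat-shattering dimension) is the largest cardinality of a set $\gamma$-shattered by $\mathcal{F}$, and $\mathrm{fat}^0_\gamma(\mathcal{F})$ is the largest cardinality of a set $\gamma$-shattered at zero by $\mathcal{F}$. The Lipschitz constant of $f$ is the smallest $L\ge 0$ with $|f(x)-f(x')|\le L\rho(x,x')$ for all $x,x'$. *)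

theory Defs
  imports "HOL-Analysis.Analysis" "HOL-Library.Extended_Nat"
begin

definition gamma_shattered :: "('a \<Rightarrow> real) set \<Rightarrow> real \<Rightarrow> 'a set \<Rightarrow> bool" where
  "gamma_shattered F \<gamma> X \<longleftrightarrow> finite X \<and>
     (\<exists>r :: 'a \<Rightarrow> real. \<forall>y :: 'a \<Rightarrow> real. (\<forall>x\<in>X. y x \<in> {-1, 1}) \<longrightarrow>
        (\<exists>f\<in>F. \<forall>x\<in>X. y x * (f x - r x) \<ge> \<gamma>))"

definition gamma_shattered_zero :: "('a \<Rightarrow> real) set \<Rightarrow> real \<Rightarrow> 'a set \<Rightarrow> bool" where
  "gamma_shattered_zero F \<gamma> X \<longleftrightarrow> finite X \<and>
     (\<forall>y :: 'a \<Rightarrow> real. (\<forall>x\<in>X. y x \<in> {-1, 1}) \<longrightarrow>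
        (\<exists>f\<in>F. \<forall>x\<in>X. y x * f x \<ge> \<gamma>))"

definition fat :: "('a \<Rightarrow> real) set \<Rightarrow> real \<Rightarrow> enat" where
  "fat F \<gamma> = Sup ((\<lambda>X. enat (card X)) ` {X. gamma_shattered F \<gamma> X})"

definition fat0 :: "('a \<Rightarrow> real) set \<Rightarrow> real \<Rightarrow> enat" where
  "fat0 F \<gamma> = Sup ((\<lambda>X. enat (card X)) ` {X. gamma_shattered_zero F \<gamma> X})"

end

theory Submission
  imports Defs
begin

lemma shatter_eq:
  fixes F :: "('a::metric_space \<Rightarrow> real) set" and L :: real
  defines "F \<equiv> {f. L-lipschitz_on UNIV f}"
  shows "gamma_shattered F \<gamma> X = gamma_shattered_zero F \<gamma> X"
proof
  assume "gamma_shattered_zero F \<gamma> X"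
  then show "gamma_shattered F \<gamma> X"
    unfolding gamma_shattered_def gamma_shattered_zero_def
    by (intro conjI exI[of _ "\<lambda>_. 0"]) auto
next
  assume "gamma_shattered F \<gamma> X"
  then obtain r where fin: "finite X" and r: "\<And>y. (\<forall>x\<in>X. y x \<in> {-1, 1}) \<Longrightarrow>
        (\<exists>f\<in>F. \<forall>x\<in>X. y x * (f x - r x) \<ge> \<gamma>)"
    unfolding gamma_shattered_def by blast
  show "gamma_shattered_zero F \<gamma> X"
    unfolding gamma_shattered_zero_def
  proof (intro conjI fin allI impI)
    fix y :: "'a \<Rightarrow> real" assume y: "\<forall>x\<in>X. y x \<in> {-1, 1}"
    obtain f where f: "f \<in> F" "\<forall>x\<in>X. y x * (f x - r x) \<ge> \<gamma>" using r[OF y] by blast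
    have y': "\<forall>x\<in>X. (- y x) \<in> {-1, 1}" using y by auto
    obtain h where h: "h \<in> F" "\<forall>x\<in>X. - y x * (h x - r x) \<ge> \<gamma>" using r[OF y'] by blast
    define g where "g = (\<lambda>x. (f x - h x) / 2)"
    have "g \<in> F"
      unfolding F_def
    proof (simp, rule lipschitz_onI)
      fix a b :: 'a
      have lf: "dist (f a) (f b) \<le> L * dist a b" using f(1) unfolding F_def
        by (auto dest: lipschitz_onD)
      have lh: "dist (h a) (h b) \<le> L * dist a b" using h(1) unfolding F_def
        by (auto dest: lipschitz_onD)
      have "dist (g a) (g b) = \<bar>(f a - f b) - (h a - h b)\<bar> / 2"
      proof -
        have "g a - g b = ((f a - f b) - (h a - h b)) / 2" unfolding g_def by (simp add: field_simps)
        then show ?thesis unfolding dist_real_def by (simp only: abs_divide)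
      qed
      also have "\<dots> \<le> (dist (f a) (f b) + dist (h a) (h b)) / 2"
        unfolding dist_real_def by simp
      also have "\<dots> \<le> L * dist a b" using lf lh by simp
      finally show "dist (g a) (g b) \<le> L * dist a b" .
      show "0 \<le> L" using f(1) unfolding F_def by (auto dest: lipschitz_on_nonneg)
    qed
    moreover have "\<forall>x\<in>X. y x * g x \<ge> \<gamma>"
    proof
      fix x assume "x \<in> X"
      then have "y x * (f x - r x) \<ge> \<gamma>" "- y x * (h x - r x) \<ge> \<gamma>" using f h by auto
      then show "y x * g x \<ge> \<gamma>" unfolding g_def by (simp add: algebra_simps)
    qed
    ultimately show "\<exists>f\<in>F. \<forall>x\<in>X. \<gamma> \<le> y x * f x" by blast
  qed
qed

theorem mainTheorem1:
  fixes L \<gamma> :: real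
  assumes "L > 0" and "\<gamma> > 0"
  shows "fat {f :: 'a::metric_space \<Rightarrow> real. L-lipschitz_on UNIV f} \<gamma>
       = fat0 {f :: 'a::metric_space \<Rightarrow> real. L-lipschitz_on UNIV f} \<gamma>"
proof -
  have "{X. gamma_shattered {f :: 'a::metric_space \<Rightarrow> real. L-lipschitz_on UNIV f} \<gamma> X}
      = {X. gamma_shattered_zero {f :: 'a::metric_space \<Rightarrow> real. L-lipschitz_on UNIV f} \<gamma> X}"
    using shatter_eq[of L \<gamma>] by blast
  then show ?thesis unfolding fat_def fat0_def by simp
qed

end
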